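(* Let $n\ge 2$ and let $g\ge0$ be an integer with $\gcd(n,g)=1$. Let $(H_{k,m})_{m\ge0}$ be a generalized $k$-Horadam sequence with $H_{k,1}\ne0$, and put $M=g(k)(H_{k,n}-H_{k,0})$, $N=H_{k,1}-H_{k,n+1}$, and assume $M\neq 0$. Then $$\det C_{n,g}(H)=\det Q_g\cdot\left[H_{k,1}N^{n-1}+H_{k,1}M^{n-2}\sum_{i=1}^{n-1}\left(-\frac{H_{k,2}H_{k,i+1}}{H_{k,1}}+H_{k,i+2}\right)\left(\frac{N}{M}\right)^{i-1}\right].$$
   Context: Generalized $k$-Horadam sequence: $k>0$ is a real number, $f(k),g(k)$ are real numbers (values of fixed polynomials in $k$) with $f(k)^2+4g(k)>0$, and $a,b\in\mathbb{R}$; the sequence is defined by $H_{k,0}=a$, $H_{k,1}=b$, $H_{k,m+2}=f(k)H_{k,m+1}+g(k)H_{k,m}$ for $m\ge 0$. The real number $g(k)$ is unrelated to the integer shift parameter $g$. For $n\ge1$, an integer $g\ge 0$ and numbers $a_0,\dots,a_{n-1}$, the $g$-circulant matrix $g\text{-}circ(a_0,\dots,a_{n-1})$ is the $n\times n$ matrix whose $(i,j)$ entry ($0\le i,j\le n-1$) is $a_{(j-ig)\bmod n}$. $C_{n,g}(H):=g\text{-}circ(H_{k,1},\dots,H_{k,n})$. $Q_g:=g\text{-}circ(1,0,\dots,0)$, i.e. the $n\times n$ matrix whose $(i,j)$ entry is $1$ if $j\equiv ig \pmod n$ and $0$ otherwise. *)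

theory Defs
  imports "Jordan_Normal_Form.Determinant" "HOL-Computational_Algebra.Polynomial"
begin

text \<open>Generalized k-Horadam sequence with recurrence coefficients p = f(k), q = g(k),
  initial values a, b.\<close>
fun horadam :: "real \<Rightarrow> real \<Rightarrow> real \<Rightarrow> real \<Rightarrow> nat \<Rightarrow> real" where
  "horadam p q a b 0 = a"
| "horadam p q a b (Suc 0) = b"
| "horadam p q a b (Suc (Suc m)) = p * horadam p q a b (Suc m) + q * horadam p q a b m"

definition gcirc :: "nat \<Rightarrow> nat \<Rightarrow> (nat \<Rightarrow> 'a) \<Rightarrow> 'a mat" where
  "gcirc n g a = mat n n (\<lambda>(i, j). a (nat ((int j - int i * int g) mod int n)))"

definition Qg :: "nat \<Rightarrow> nat \<Rightarrow> 'a::{zero,one} mat" where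
  "Qg n g = gcirc n g (\<lambda>l. if l = 0 then 1 else 0)"

end

theory Submission imports Defs begin

lemma mat_mult_entry:
  assumes "A \<in> carrier_mat n m" "B \<in> carrier_mat m l" "i < n" "j < l"
  shows "(A * B) $$ (i,j) = (\<Sum>k<m. A $$ (i,k) * B $$ (k,j))"
  using assms by (auto simp: scalar_prod_def lessThan_atLeast0 intro!: sum.cong)

lemma det_unit_upper:
  assumes "A \<in> carrier_mat n n" "\<And>i j. j < i \<Longrightarrow> i < n \<Longrightarrow> A $$ (i,j) = 0"
    "\<And>i. i < n \<Longrightarrow> A $$ (i,i) = 1"
  shows "det A = 1"
proof -
  have "det A = prod_list (diag_mat A)"
    by (rule det_upper_triangular[OF _ assms(1)]) (use assms in auto)
  also have "diag_mat A = map (\<lambda>i. 1) [0..<n]"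
    using assms by (auto simp: diag_mat_def)
  finally show ?thesis by (simp add: map_replicate_const)
qed

lemma det_unit_lower:
  assumes "A \<in> carrier_mat n n" "\<And>i j. i < j \<Longrightarrow> j < n \<Longrightarrow> A $$ (i,j) = 0"
    "\<And>i. i < n \<Longrightarrow> A $$ (i,i) = 1"
  shows "det A = 1"
proof -
  have "det A = prod_list (diag_mat A)"
    by (rule det_lower_triangular[OF _ assms(1)]) (use assms in auto)
  also have "diag_mat A = map (\<lambda>i. 1) [0..<n]"
    using assms by (auto simp: diag_mat_def)
  finally show ?thesis by (simp add: map_replicate_const)
qed

lemma nat_mod_diff:
  assumes "i < n" "j < n"
  shows "nat ((int j - int i) mod int n) = (if i \<le> j then j - i else n + j - i)"
proof (cases "i \<le> j")
  case True
  then have "int j - int i = int (j - i)" by simp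
  moreover have "int (j - i) mod int n = int (j - i)" using assms by (simp add: True)
  ultimately show ?thesis using True by simp
next
  case False
  have "(int j - int i) mod int n = (int j - int i + int n) mod int n" by simp
  also have "int j - int i + int n = int (n + j - i)" using False assms by simp
  also have "int (n + j - i) mod int n = int (n + j - i)" using False assms
    by (intro mod_pos_pos_trivial) auto
  finally show ?thesis using False by simp
qed

lemma gcirc_factor:
  assumes "n > 0"
  shows "gcirc n g a = (Qg n g :: 'a::comm_ring_1 mat) * gcirc n 1 a"
proof (rule eq_matI)
  fix i j assume ij: "i < dim_row (Qg n g * gcirc n 1 a)" "j < dim_col (Qg n g * gcirc n 1 a)"
  then have i: "i < n" and j: "j < n" by (auto simp: Qg_def gcirc_def)
  define r where "r = (i * g) mod n"
  have r: "r < n" using assms by (simp add: r_def)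
  have "(Qg n g * gcirc n 1 a) $$ (i,j) = (\<Sum>l<n. (Qg n g :: 'a mat) $$ (i,l) * gcirc n 1 a $$ (l,j))"
    by (rule mat_mult_entry[OF _ _ i j]) (auto simp: Qg_def gcirc_def)
  also have "\<dots> = (\<Sum>l<n. (if l = r then gcirc n 1 a $$ (l,j) else 0))"
  proof (rule sum.cong[OF refl])
    fix l assume l: "l \<in> {..<n}"
    have "nat ((int l - int i * int g) mod int n) = 0 \<longleftrightarrow> l = r"
    proof -
      have "nat ((int l - int i * int g) mod int n) = 0 \<longleftrightarrow> (int l - int i * int g) mod int n = 0"
        using assms by (smt (verit) nat_0_iff of_nat_0_less_iff pos_mod_sign)
      also have "\<dots> \<longleftrightarrow> int l mod int n = (int i * int g) mod int n"
        by (simp add: mod_eq_dvd_iff dvd_eq_mod_eq_0[symmetric])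
      also have "\<dots> \<longleftrightarrow> l = r" using l
        by (simp add: r_def flip: of_nat_mult of_nat_mod)
      finally show ?thesis .
    qed
    then show "(Qg n g :: 'a mat) $$ (i,l) * gcirc n 1 a $$ (l,j) = (if l = r then gcirc n 1 a $$ (l,j) else 0)"
      using i l by (auto simp: Qg_def gcirc_def)
  qed
  also have "\<dots> = gcirc n 1 a $$ (r,j)" using r by simp
  also have "\<dots> = a (nat ((int j - int i * int g) mod int n))"
  proof -
    have "(int j - int r) mod int n = (int j - int i * int g) mod int n"
      by (simp add: r_def of_nat_mod mod_diff_right_eq)
    then show ?thesis using r j by (simp add: gcirc_def)
  qed
  also have "\<dots> = gcirc n g a $$ (i,j)" using i j by (simp add: gcirc_def)
  finally show "gcirc n g a $$ (i, j) = (Qg n g * gcirc n 1 a) $$ (i, j)" by simp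
qed (auto simp: Qg_def gcirc_def)


lemma horadam_rec:
  assumes "k \<ge> 2"
  shows "horadam p q a b k = p * horadam p q a b (k - 1) + q * horadam p q a b (k - 2)"
proof -
  obtain k' where "k = Suc (Suc k')" using assms by (metis add_2_eq_Suc le_Suc_ex)
  then show ?thesis by simp
qed

lemma circ_det:
  fixes p q a b :: real and n :: nat
  defines "H \<equiv> horadam p q a b"
  defines "M \<equiv> q * (H n - H 0)"
  defines "N \<equiv> H 1 - H (n + 1)"
  assumes n2: "n \<ge> 2" and H1: "H 1 \<noteq> 0" and M0: "M \<noteq> 0"
  shows "det (gcirc n 1 (\<lambda>l. H (l + 1))) =
      H 1 * N ^ (n - 1) + H 1 * M ^ (n - 2) *
        (\<Sum>i = 1..n - 1. (- (H 2 * H (i + 1)) / H 1 + H (i + 2)) * (N / M) ^ (i - 1))"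
proof -
  have rec: "\<And>k. k \<ge> 2 \<Longrightarrow> H k = p * H (k - 1) + q * H (k - 2)"
    unfolding H_def by (rule horadam_rec)
  have H2: "H 2 = p * H 1 + q * H 0" using rec[of 2] by simp
  define C where "C = gcirc n 1 (\<lambda>l. H (l + 1))"
  have Cc: "C \<in> carrier_mat n n" by (simp add: C_def gcirc_def)
  have Ce: "C $$ (i,j) = H ((if i \<le> j then j - i else n + j - i) + 1)" if "i < n" "j < n" for i j
    using that nat_mod_diff[OF that(1,2)] by (simp add: C_def gcirc_def)
  define E :: "real mat" where "E = mat n n (\<lambda>(l,j). (if l = j then 1 else 0) +
     (if 2 \<le> j then (if l = j - 1 then -p else 0) + (if l = j - 2 then -q else 0) else 0))"
  have Ec: "E \<in> carrier_mat n n" by (simp add: E_def)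
  have detE: "det E = 1"
    by (rule det_unit_upper[OF Ec]) (auto simp: E_def)
  define B where "B = C * E"
  have Bc: "B \<in> carrier_mat n n" using Cc Ec by (simp add: B_def)
  have Bsum: "B $$ (i,j) = C $$ (i,j) + (if 2 \<le> j then -p * C $$ (i, j - 1) - q * C $$ (i, j - 2) else 0)"
    if ij: "i < n" "j < n" for i j
  proof -
    have "B $$ (i,j) = (\<Sum>l<n. C $$ (i,l) * E $$ (l,j))"
      unfolding B_def by (rule mat_mult_entry[OF Cc Ec ij])
    also have "\<dots> = (\<Sum>l<n. (if l = j then C $$ (i,l) else 0) +
       (if 2 \<le> j then (if l = j - 1 then -p * C $$ (i,l) else 0) + (if l = j - 2 then -q * C $$ (i,l) else 0) else 0))"
      by (rule sum.cong[OF refl]) (use ij in \<open>auto simp: E_def algebra_simps\<close>)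
    also have "\<dots> = C $$ (i,j) + (if 2 \<le> j then -p * C $$ (i, j - 1) - q * C $$ (i, j - 2) else 0)"
      using ij by (auto simp: sum.distrib sum.delta)
    finally show ?thesis .
  qed
  have Be: "B $$ (i,j) = (if j < 2 then C $$ (i,j) else if i = j then N else if i = j - 1 then -M else 0)"
    if ij: "i < n" "j < n" for i j
  proof (cases "j < 2")
    case True then show ?thesis using Bsum[OF ij] by simp
  next
    case False
    then have j2: "2 \<le> j" by simp
    have jm: "j - 1 < n" "j - 2 < n" using ij by auto
    consider "i \<le> j - 2" | "i = j - 1" | "i = j" | "j < i" using j2 by linarith
    then show ?thesis
    proof cases
      case 1
      define d where "d = j - i - 2"
      have jd: "j = i + 2 + d" using 1 j2 unfolding d_def by linarith
      have c: "C $$ (i,j) = H (j - i + 1)" "C $$ (i,j-1) = H (j - i)" "C $$ (i,j-2) = H (j - i - 1)"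
        using Ce[OF ij] Ce[OF ij(1) jm(1)] Ce[OF ij(1) jm(2)] unfolding jd by auto
      have "H (j - i + 1) = p * H (j - i) + q * H (j - i - 1)" using rec[of "j - i + 1"] 1 j2 by simp
      then show ?thesis using 1 j2 Bsum[OF ij] c by auto
    next
      case 2
      have c: "C $$ (i,j) = H 2" "C $$ (i,j-1) = H 1" "C $$ (i,j-2) = H n"
        using Ce[OF ij] Ce[OF ij(1) jm(1)] Ce[OF ij(1) jm(2)] 2 j2 n2 by (auto simp: numeral_2_eq_2)
      have "i \<noteq> j" using 2 j2 by simp
      then show ?thesis using 2 j2 Bsum[OF ij] H2 c
        by (simp add: M_def algebra_simps)
    next
      case 3
      have sn: "Suc (n - 2) = n - 1" using n2 by simp
      have c: "C $$ (i,j) = H 1" "C $$ (i,j-1) = H n" "C $$ (i,j-2) = H (n - 1)"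
        using sn Ce[OF ij] Ce[OF ij(1) jm(1)] Ce[OF ij(1) jm(2)] 3 j2 ij by auto
      have "H (n + 1) = p * H n + q * H (n - 1)" using rec[of "n+1"] n2 by simp
      then show ?thesis using 3 j2 Bsum[OF ij] c
        by (simp add: N_def algebra_simps)
    next
      case 4
      have "n + j = i + (n + j - i - 2) + 2" using 4 ij j2 by linarith
      then obtain d where dd: "n + j = i + d + 2" by blast
      have x: "n + j - i = d + 2" "n + (j - 1) - i = d + 1" "n + (j - 2) - i = d"
        using dd j2 by linarith+
      have c: "C $$ (i,j) = H (Suc (Suc (Suc d)))" "C $$ (i,j-1) = H (Suc (Suc d))" "C $$ (i,j-2) = H (Suc d)"
      proof -
        have nl: "\<not> i \<le> j" "\<not> i \<le> j - 1" "\<not> i \<le> j - 2" using 4 by auto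
        have "C $$ (i,j) = H ((if i \<le> j then j - i else n + j - i) + 1)" by (rule Ce[OF ij])
        also have "(if i \<le> j then j - i else n + j - i) = n + j - i" using nl(1) by (rule if_not_P)
        finally show "C $$ (i,j) = H (Suc (Suc (Suc d)))" unfolding x(1) by simp
        have "C $$ (i,j-1) = H ((if i \<le> j - 1 then j - 1 - i else n + (j - 1) - i) + 1)" by (rule Ce[OF ij(1) jm(1)])
        also have "(if i \<le> j - 1 then j - 1 - i else n + (j - 1) - i) = n + (j - 1) - i" using nl(2) by (rule if_not_P)
        finally show "C $$ (i,j-1) = H (Suc (Suc d))" unfolding x(2) by simp
        have "C $$ (i,j-2) = H ((if i \<le> j - 2 then j - 2 - i else n + (j - 2) - i) + 1)" by (rule Ce[OF ij(1) jm(2)])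
        also have "(if i \<le> j - 2 then j - 2 - i else n + (j - 2) - i) = n + (j - 2) - i" using nl(3) by (rule if_not_P)
        finally show "C $$ (i,j-2) = H (Suc d)" unfolding x(3) by simp
      qed
      have r: "H (Suc (Suc (Suc d))) = p * H (Suc (Suc d)) + q * H (Suc d)" using rec[of "Suc (Suc (Suc d))"] by simp
      have "B $$ (i,j) = C $$ (i,j) + (- p * C $$ (i, j - 1) - q * C $$ (i, j - 2))"
        using Bsum[OF ij] j2 by simp
      also have "\<dots> = 0" unfolding c r by (simp add: algebra_simps)
      finally have b0: "B $$ (i,j) = 0" .
      have "i \<noteq> j" "i \<noteq> j - 1" "\<not> j < 2" using 4 j2 by auto
      then show ?thesis using b0 by simp
    qed
  qed
  have B00: "B $$ (0,0) = H 1" and B01: "B $$ (0,1) = H 2" and B0j: "\<And>j. 2 \<le> j \<Longrightarrow> j < n \<Longrightarrow> B $$ (0,j) = 0"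
    using Be Ce n2 by (auto simp: numeral_2_eq_2)
  define L :: "real mat" where "L = mat n n (\<lambda>(i,k). if i = k then 1 else if k = 0 then - (B $$ (i,0)) / H 1 else 0)"
  have Lc: "L \<in> carrier_mat n n" by (simp add: L_def)
  have detL: "det L = 1" by (rule det_unit_lower[OF Lc]) (auto simp: L_def)
  define B' where "B' = L * B"
  have B'c: "B' \<in> carrier_mat n n" using Lc Bc by (simp add: B'_def)
  have B'e: "B' $$ (i,j) = B $$ (i,j) + (if i = 0 then 0 else - (B $$ (i,0)) / H 1 * B $$ (0,j))"
    if ij: "i < n" "j < n" for i j
  proof -
    have "B' $$ (i,j) = (\<Sum>k<n. L $$ (i,k) * B $$ (k,j))"
      unfolding B'_def by (rule mat_mult_entry[OF Lc Bc ij])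
    also have "\<dots> = (\<Sum>k<n. (if k = i then B $$ (i,j) else 0) +
        (if k = 0 then (if i = 0 then 0 else - (B $$ (i,0)) / H 1 * B $$ (0,j)) else 0))"
      by (rule sum.cong[OF refl]) (use ij in \<open>auto simp: L_def\<close>)
    also have "\<dots> = B $$ (i,j) + (if i = 0 then 0 else - (B $$ (i,0)) / H 1 * B $$ (0,j))"
      using ij by (simp add: sum.distrib)
    finally show ?thesis .
  qed
  have detB': "det B' = det B"
    using det_mult[OF Lc Bc] detL by (simp add: B'_def)
  have detB: "det B = det C"
    using det_mult[OF Cc Ec] detE by (simp add: B_def)
  have n0: "0 < n" using n2 by simp
  have "det B' = (\<Sum>i<n. B' $$ (i,0) * cofactor B' i 0)"
    by (rule laplace_expansion_column[OF B'c n0])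
  also have "\<dots> = (\<Sum>i<n. if i = 0 then H 1 * cofactor B' 0 0 else 0)"
    by (rule sum.cong[OF refl]) (use B'e B00 H1 n0 in auto)
  also have "\<dots> = H 1 * det (mat_delete B' 0 0)" using n0 by (simp add: cofactor_def)
  finally have detB'2: "det B' = H 1 * det (mat_delete B' 0 0)" .
  define m where "m = n - 1"
  have m1: "m \<ge> 1" and nm: "n = m + 1" using n2 by (auto simp: m_def)
  define v where "v r = B $$ (r + 1, 1) - B $$ (r + 1, 0) * H 2 / H 1" for r
  define S where "S = mat m m (\<lambda>(r,c). if c = 0 then v r else if r = c then N else if r = c - 1 then - M else 0)"
  have Sc: "S \<in> carrier_mat m m" by (simp add: S_def)
  have delS: "mat_delete B' 0 0 = S"
  proof (rule eq_matI)
    fix r c assume rc: "r < dim_row S" "c < dim_col S"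
    then have r: "r < m" and c: "c < m" by (auto simp: S_def)
    have "mat_delete B' 0 0 $$ (r,c) = B' $$ (r + 1, c + 1)"
      using r c B'c nm by (simp add: mat_delete_def)
    also have "\<dots> = S $$ (r,c)"
    proof (cases "c = 0")
      case True then show ?thesis using r c nm B'e[of "r+1" 1] B01 by (simp add: S_def v_def)
    next
      case False then show ?thesis using r c nm B'e[of "r+1" "c+1"] B0j[of "c+1"] Be[of "r+1" "c+1"]
        by (auto simp: S_def)
    qed
    finally show "mat_delete B' 0 0 $$ (r,c) = S $$ (r,c)" .
  qed (use B'c Sc nm in auto)
  define x where "x = N / M"
  have xM: "x * M = N" using M0 by (simp add: x_def)
  define G :: "real mat" where "G = mat m m (\<lambda>(r,s). if s \<le> r then x ^ (r - s) else 0)"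
  have Gc: "G \<in> carrier_mat m m" by (simp add: G_def)
  have detG: "det G = 1" by (rule det_unit_lower[OF Gc]) (auto simp: G_def)
  define T where "T = G * S"
  have Tc: "T \<in> carrier_mat m m" using Gc Sc by (simp add: T_def)
  have detT: "det T = det S" using det_mult[OF Gc Sc] detG by (simp add: T_def)
  have Te: "T $$ (r,c) = (if c = r + 1 then - M else 0)" if rc: "r < m" "c < m" "c \<ge> 1" for r c
  proof -
    have "T $$ (r,c) = (\<Sum>s<m. G $$ (r,s) * S $$ (s,c))"
      unfolding T_def by (rule mat_mult_entry[OF Gc Sc rc(1,2)])
    also have "\<dots> = (\<Sum>s<m. (if s = c then G $$ (r,c) * N else 0) + (if s = c - 1 then - (G $$ (r, c - 1) * M) else 0))"
      by (rule sum.cong[OF refl]) (use rc in \<open>auto simp: S_def\<close>)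
    also have "\<dots> = G $$ (r,c) * N - G $$ (r, c - 1) * M"
      using rc by (simp add: sum.distrib)
    also have "\<dots> = (if c = r + 1 then - M else 0)"
    proof -
      consider "c \<le> r" | "c = r + 1" | "c > r + 1" by linarith
      then show ?thesis
      proof cases
        case 1
        have "r - (c - 1) = Suc (r - c)" using 1 rc by simp
        then have "G $$ (r,c) * N - G $$ (r, c - 1) * M = x ^ (r - c) * (N - x * M)"
          using 1 rc by (simp add: G_def algebra_simps)
        then show ?thesis using 1 xM by simp
      next
        case 2 then show ?thesis using rc by (simp add: G_def)
      next
        case 3 then show ?thesis using rc by (simp add: G_def)
      qed
    qed
    finally show ?thesis .
  qed
  have Tw: "T $$ (m - 1, 0) = (\<Sum>s<m. x ^ (m - 1 - s) * v s)"
  proof -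
    have "T $$ (m - 1, 0) = (\<Sum>s<m. G $$ (m - 1, s) * S $$ (s, 0))"
      unfolding T_def by (rule mat_mult_entry[OF Gc Sc]) (use m1 in auto)
    also have "\<dots> = (\<Sum>s<m. x ^ (m - 1 - s) * v s)"
      by (rule sum.cong[OF refl]) (use m1 in \<open>auto simp: G_def S_def\<close>)
    finally show ?thesis .
  qed
  have m0: "m - 1 < m" using m1 by simp
  have "det T = (\<Sum>j<m. T $$ (m - 1, j) * cofactor T (m - 1) j)"
    by (rule laplace_expansion_row[OF Tc m0])
  also have "\<dots> = (\<Sum>j<m. if j = 0 then T $$ (m - 1, 0) * cofactor T (m - 1) 0 else 0)"
    by (rule sum.cong[OF refl]) (use Te m1 in auto)
  also have "\<dots> = T $$ (m - 1, 0) * ((-1) ^ (m - 1) * det (mat_delete T (m - 1) 0))"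
    using m1 by (simp add: cofactor_def)
  also have "mat_delete T (m - 1) 0 = (- M) \<cdot>\<^sub>m 1\<^sub>m (m - 1)"
  proof (rule eq_matI)
    fix r c assume "r < dim_row ((- M) \<cdot>\<^sub>m 1\<^sub>m (m - 1))" "c < dim_col ((- M) \<cdot>\<^sub>m 1\<^sub>m (m - 1))"
    then have r: "r < m - 1" and c: "c < m - 1" by auto
    have "mat_delete T (m - 1) 0 $$ (r,c) = T $$ (r, c + 1)"
      using r c Tc by (simp add: mat_delete_def)
    also have "\<dots> = ((- M) \<cdot>\<^sub>m 1\<^sub>m (m - 1)) $$ (r,c)"
      using Te[of r "c+1"] r c by auto
    finally show "mat_delete T (m - 1) 0 $$ (r,c) = ((- M) \<cdot>\<^sub>m 1\<^sub>m (m - 1)) $$ (r,c)" .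
  qed (use Tc in auto)
  also have "det ((- M) \<cdot>\<^sub>m 1\<^sub>m (m - 1)) = (- M) ^ (m - 1)" by simp
  finally have "det T = T $$ (m - 1, 0) * M ^ (m - 1)"
    by (simp add: power_mult_distrib[symmetric])
  then have detC: "det C = H 1 * (\<Sum>s<m. x ^ (m - 1 - s) * v s) * M ^ (m - 1)"
    using detB detB' detB'2 delS detT Tw by simp
  define f where "f i = - (H 2 * H (i + 1)) / H 1 + H (i + 2)" for i
  have vs: "v s = f (m - s)" if "1 \<le> s" "s < m" for s
  proof -
    have "B $$ (s + 1, 1) = H (n - s + 1)" "B $$ (s + 1, 0) = H (n - s)"
      using Be[of "s+1" 1] Be[of "s+1" 0] Ce[of "s+1" 1] Ce[of "s+1" 0] that nm by (auto simp: Suc_diff_le)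
    moreover have "m - s + 1 = n - s" "m - s + 2 = n - s + 1" using that nm by auto
    ultimately show ?thesis by (simp add: v_def f_def)
  qed
  have v0: "v 0 = f m + N"
  proof -
    have "B $$ (1, 1) = H 1" "B $$ (1, 0) = H n"
      using Be[of 1 1] Be[of 1 0] Ce[of 1 1] Ce[of 1 0] n2 by auto
    then show ?thesis using nm by (simp add: v_def f_def N_def)
  qed
  have reidx: "(\<Sum>i = 1..m. f i * x ^ (i - 1)) = (\<Sum>s<m. x ^ (m - 1 - s) * f (m - s))"
    by (rule sum.reindex_bij_witness[of _ "\<lambda>s. m - s" "\<lambda>i. m - i"]) (auto simp: mult.commute)
  define sf where "sf = (\<Sum>i = 1..m. f i * x ^ (i - 1))"
  have "(\<Sum>s<m. x ^ (m - 1 - s) * v s) = (\<Sum>s<m. x ^ (m - 1 - s) * f (m - s) + (if s = 0 then x ^ (m - 1) * N else 0))"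
  proof (rule sum.cong[OF refl])
    fix s assume s: "s \<in> {..<m}"
    show "x ^ (m - 1 - s) * v s = x ^ (m - 1 - s) * f (m - s) + (if s = 0 then x ^ (m - 1) * N else 0)"
    proof (cases "s = 0")
      case True then show ?thesis by (simp add: v0 distrib_left)
    next
      case False then show ?thesis using vs[of s] s by simp
    qed
  qed
  also have "\<dots> = (\<Sum>s<m. x ^ (m - 1 - s) * f (m - s)) + x ^ (m - 1) * N"
    using m1 by (simp add: sum.distrib)
  also have "\<dots> = sf + x ^ (m - 1) * N" unfolding sf_def reidx ..
  finally have ws: "(\<Sum>s<m. x ^ (m - 1 - s) * v s) = sf + x ^ (m - 1) * N" .
  have xN: "x ^ (m - 1) * N * M ^ (m - 1) = N ^ m"
  proof -
    have "x ^ (m - 1) * N * M ^ (m - 1) = (x * M) ^ (m - 1) * N" by (simp add: power_mult_distrib)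
    also have "\<dots> = N ^ (m - 1) * N" using xM by simp
    also have "\<dots> = N ^ m" using m1 by (cases m) (auto simp: mult.commute)
    finally show ?thesis .
  qed
  have "det C = H 1 * (sf + x ^ (m - 1) * N) * M ^ (m - 1)"
    using detC ws by simp
  also have "\<dots> = H 1 * M ^ (m - 1) * sf + H 1 * (x ^ (m - 1) * N * M ^ (m - 1))"
    by (simp add: algebra_simps)
  also have "\<dots> = H 1 * N ^ m + H 1 * M ^ (m - 1) * sf" unfolding xN by simp
  finally have "det C = H 1 * N ^ m + H 1 * M ^ (m - 1) * sf" .
  moreover have "n - 1 = m" "n - 2 = m - 1" using nm by auto
  ultimately show ?thesis by (simp add: C_def f_def x_def sf_def)
qed


theorem theorem2:
  fixes n g :: nat and k a b :: real and f gp :: "real poly"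
  defines "H \<equiv> horadam (poly f k) (poly gp k) a b"
  defines "M \<equiv> poly gp k * (H n - H 0)"
  defines "N \<equiv> H 1 - H (n + 1)"
  assumes "n \<ge> 2" and "coprime n g" and "k > 0"
    and "(poly f k)\<^sup>2 + 4 * poly gp k > 0"
    and "H 1 \<noteq> 0" and "M \<noteq> 0"
  shows "det (gcirc n g (\<lambda>l. H (l + 1))) =
    det (Qg n g :: real mat) *
      (H 1 * N ^ (n - 1) + H 1 * M ^ (n - 2) *
        (\<Sum>i = 1..n - 1. (- (H 2 * H (i + 1)) / H 1 + H (i + 2)) * (N / M) ^ (i - 1)))"
proof -
  have n0: "n > 0" using assms(4) by simp
  have Qc: "(Qg n g :: real mat) \<in> carrier_mat n n" by (simp add: Qg_def gcirc_def)
  have Cc: "gcirc n 1 (\<lambda>l. H (l + 1)) \<in> carrier_mat n n" by (simp add: gcirc_def)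
  have "det (gcirc n g (\<lambda>l. H (l + 1))) = det (Qg n g :: real mat) * det (gcirc n 1 (\<lambda>l. H (l + 1)))"
    unfolding gcirc_factor[OF n0, of g] by (rule det_mult[OF Qc Cc])
  also have "det (gcirc n 1 (\<lambda>l. H (l + 1))) =
      H 1 * N ^ (n - 1) + H 1 * M ^ (n - 2) *
        (\<Sum>i = 1..n - 1. (- (H 2 * H (i + 1)) / H 1 + H (i + 2)) * (N / M) ^ (i - 1))"
    unfolding H_def M_def N_def
    by (rule circ_det) (use assms in \<open>simp_all add: H_def M_def N_def\<close>)
  finally show ?thesis .
qed

end
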